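(* Let $L$ be a finite-dimensional Lie algebra over a field $F$ and let $0\ne u\in L$ be such that $Fu$ is semi-modular in $L$ but not an ideal of $L$. Then one of the following holds: (i) $L$ is almost abelian; (ii) $\langle u,x\rangle$ is a $\mu$-algebra for every $x\in L\setminus Fu$; (iii) $F$ has characteristic two and there is an isomorphism $L\cong K$ carrying $Fu$ onto $Fc$.
   Context: $K$ denotes the three-dimensional Lie algebra with basis $a,b,c$ and products $[a,b]=c$, $[b,c]=b$, $[a,c]=a$. $\langle U,B\rangle$ denotes the generated subalgebra. A subalgebra $B$ covers a subalgebra $A$ if $A$ is a maximal subalgebra of $B$. $U$ is upper modular (um) in $L$ if whenever $B$ is a subalgebra of $L$ which covers $U\cap B$, then $\langle U,B\rangle$ covers $U$; $U$ is lower modular (lm) in $L$ if whenever $B$ is a subalgebra of $L$ such that $\langle U,B\rangle$ covers $U$, then $B$ covers $U\cap B$; $U$ is semi-modular (sm) in $L$ if it is both um and lm. A $\mu$-algebra is a non-solvable Lie algebra in which every proper subalgebra is one-dimensional. $L$ is almost abelian if $L=L^2\oplus Fx$ for some $x$, where $L^2=[L,L]$ is abelian and $\mathrm{ad}\,x$ acts as the identity map on $L^2$. *)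

theory Defs
  imports Complex_Main "HOL-Library.Product_Plus"
begin

text \<open>A Lie algebra is modelled as a whole type 'v (an additive group) together with
a scalar multiplication s by a field 'f and a bracket br.  The Lie algebra L is UNIV.\<close>

definition lie_algebra :: "('f::field \<Rightarrow> 'v::ab_group_add \<Rightarrow> 'v) \<Rightarrow> ('v \<Rightarrow> 'v \<Rightarrow> 'v) \<Rightarrow> bool" where
  "lie_algebra s br \<longleftrightarrow> Vector_Spaces.vector_space s
     \<and> (\<forall>x y z. br (x + y) z = br x z + br y z)
     \<and> (\<forall>x y z. br x (y + z) = br x y + br x z)
     \<and> (\<forall>a x y. br (s a x) y = s a (br x y))
     \<and> (\<forall>a x y. br x (s a y) = s a (br x y))
     \<and> (\<forall>x. br x x = 0)
     \<and> (\<forall>x y z. br x (br y z) + br y (br z x) + br z (br x y) = 0)"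

definition fin_dim :: "('f::field \<Rightarrow> 'v::ab_group_add \<Rightarrow> 'v) \<Rightarrow> bool" where
  "fin_dim s \<longleftrightarrow> (\<exists>B. finite B \<and> module.span s B = UNIV)"

definition lie_sub :: "('f::field \<Rightarrow> 'v::ab_group_add \<Rightarrow> 'v) \<Rightarrow> ('v \<Rightarrow> 'v \<Rightarrow> 'v) \<Rightarrow> 'v set \<Rightarrow> bool" where
  "lie_sub s br A \<longleftrightarrow> module.subspace s A \<and> (\<forall>x\<in>A. \<forall>y\<in>A. br x y \<in> A)"

definition lie_ideal :: "('f::field \<Rightarrow> 'v::ab_group_add \<Rightarrow> 'v) \<Rightarrow> ('v \<Rightarrow> 'v \<Rightarrow> 'v) \<Rightarrow> 'v set \<Rightarrow> bool" where
  "lie_ideal s br I \<longleftrightarrow> module.subspace s I \<and> (\<forall>x. \<forall>y\<in>I. br x y \<in> I)"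

definition lie_gen :: "('f::field \<Rightarrow> 'v::ab_group_add \<Rightarrow> 'v) \<Rightarrow> ('v \<Rightarrow> 'v \<Rightarrow> 'v) \<Rightarrow> 'v set \<Rightarrow> 'v set" where
  "lie_gen s br S = \<Inter>{B. lie_sub s br B \<and> S \<subseteq> B}"

definition covers :: "('f::field \<Rightarrow> 'v::ab_group_add \<Rightarrow> 'v) \<Rightarrow> ('v \<Rightarrow> 'v \<Rightarrow> 'v) \<Rightarrow> 'v set \<Rightarrow> 'v set \<Rightarrow> bool" where
  "covers s br B A \<longleftrightarrow> lie_sub s br A \<and> lie_sub s br B \<and> A \<subset> B
     \<and> (\<forall>C. lie_sub s br C \<and> A \<subseteq> C \<and> C \<subseteq> B \<longrightarrow> C = A \<or> C = B)"

definition upper_modular :: "('f::field \<Rightarrow> 'v::ab_group_add \<Rightarrow> 'v) \<Rightarrow> ('v \<Rightarrow> 'v \<Rightarrow> 'v) \<Rightarrow> 'v set \<Rightarrow> bool" where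
  "upper_modular s br U \<longleftrightarrow> lie_sub s br U \<and>
     (\<forall>B. lie_sub s br B \<and> covers s br B (U \<inter> B) \<longrightarrow> covers s br (lie_gen s br (U \<union> B)) U)"

definition lower_modular :: "('f::field \<Rightarrow> 'v::ab_group_add \<Rightarrow> 'v) \<Rightarrow> ('v \<Rightarrow> 'v \<Rightarrow> 'v) \<Rightarrow> 'v set \<Rightarrow> bool" where
  "lower_modular s br U \<longleftrightarrow> lie_sub s br U \<and>
     (\<forall>B. lie_sub s br B \<and> covers s br (lie_gen s br (U \<union> B)) U \<longrightarrow> covers s br B (U \<inter> B))"

definition semi_modular :: "('f::field \<Rightarrow> 'v::ab_group_add \<Rightarrow> 'v) \<Rightarrow> ('v \<Rightarrow> 'v \<Rightarrow> 'v) \<Rightarrow> 'v set \<Rightarrow> bool" where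
  "semi_modular s br U \<longleftrightarrow> upper_modular s br U \<and> lower_modular s br U"

definition lie_derived :: "('f::field \<Rightarrow> 'v::ab_group_add \<Rightarrow> 'v) \<Rightarrow> ('v \<Rightarrow> 'v \<Rightarrow> 'v) \<Rightarrow> 'v set \<Rightarrow> 'v set" where
  "lie_derived s br A = module.span s {br x y | x y. x \<in> A \<and> y \<in> A}"

definition lie_solvable :: "('f::field \<Rightarrow> 'v::ab_group_add \<Rightarrow> 'v) \<Rightarrow> ('v \<Rightarrow> 'v \<Rightarrow> 'v) \<Rightarrow> 'v set \<Rightarrow> bool" where
  "lie_solvable s br M \<longleftrightarrow> (\<exists>n. (lie_derived s br ^^ n) M = {0})"

definition mu_algebra :: "('f::field \<Rightarrow> 'v::ab_group_add \<Rightarrow> 'v) \<Rightarrow> ('v \<Rightarrow> 'v \<Rightarrow> 'v) \<Rightarrow> 'v set \<Rightarrow> bool" where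
  "mu_algebra s br M \<longleftrightarrow> lie_sub s br M \<and> \<not> lie_solvable s br M \<and>
     (\<forall>C. lie_sub s br C \<and> C \<subset> M \<and> C \<noteq> {0} \<longrightarrow> vector_space.dim s C = 1)"

definition almost_abelian :: "('f::field \<Rightarrow> 'v::ab_group_add \<Rightarrow> 'v) \<Rightarrow> ('v \<Rightarrow> 'v \<Rightarrow> 'v) \<Rightarrow> bool" where
  "almost_abelian s br \<longleftrightarrow> (let L2 = lie_derived s br UNIV in
     \<exists>x. L2 \<inter> module.span s {x} = {0} \<and> {a + b | a b. a \<in> L2 \<and> b \<in> module.span s {x}} = UNIV
        \<and> (\<forall>a\<in>L2. \<forall>b\<in>L2. br a b = 0)
        \<and> (\<forall>a\<in>L2. br x a = a))"

text \<open>The algebra K on F^3 with basis a=(1,0,0), b=(0,1,0), c=(0,0,1):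
  [a,b]=c, [b,c]=b, [a,c]=a.\<close>
definition K_scale :: "'f::field \<Rightarrow> 'f \<times> 'f \<times> 'f \<Rightarrow> 'f \<times> 'f \<times> 'f" where
  "K_scale t v = (t * fst v, t * fst (snd v), t * snd (snd v))"

definition K_br :: "'f::field \<times> 'f \<times> 'f \<Rightarrow> 'f \<times> 'f \<times> 'f \<Rightarrow> 'f \<times> 'f \<times> 'f" where
  "K_br x y = (let (x1, x2, x3) = x; (y1, y2, y3) = y in
     (x1 * y3 - x3 * y1, x2 * y3 - x3 * y2, x1 * y2 - x2 * y1))"

definition lie_iso :: "('f::field \<Rightarrow> 'v::ab_group_add \<Rightarrow> 'v) \<Rightarrow> ('v \<Rightarrow> 'v \<Rightarrow> 'v)
    \<Rightarrow> ('f \<Rightarrow> 'w::ab_group_add \<Rightarrow> 'w) \<Rightarrow> ('w \<Rightarrow> 'w \<Rightarrow> 'w) \<Rightarrow> ('v \<Rightarrow> 'w) \<Rightarrow> bool" where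
  "lie_iso s br s' br' \<phi> \<longleftrightarrow> Vector_Spaces.linear s s' \<phi> \<and> bij \<phi> \<and> (\<forall>x y. \<phi> (br x y) = br' (\<phi> x) (\<phi> y))"

end

theory Submission
  imports Defs
begin

definition two_zero :: "('f::field \<Rightarrow> 'v::ab_group_add \<Rightarrow> 'v) \<Rightarrow> bool" where
  "two_zero s \<longleftrightarrow> (2::'f) = 0"

locale lieA =
  fixes s :: "'f::field \<Rightarrow> 'v::ab_group_add \<Rightarrow> 'v" and br :: "'v \<Rightarrow> 'v \<Rightarrow> 'v"
  assumes lie: "lie_algebra s br"
begin

sublocale vector_space s using lie unfolding lie_algebra_def by auto

lemma bl_add: "br (x + y) z = br x z + br y z" using lie unfolding lie_algebra_def by auto
lemma br_add: "br x (y + z) = br x y + br x z" using lie unfolding lie_algebra_def by auto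
lemma bl_scale: "br (s a x) y = s a (br x y)" using lie unfolding lie_algebra_def by auto
lemma br_scale: "br x (s a y) = s a (br x y)" using lie unfolding lie_algebra_def by auto
lemma br_self[simp]: "br x x = 0" using lie unfolding lie_algebra_def by auto
lemma jac: "br x (br y z) + br y (br z x) + br z (br x y) = 0" using lie unfolding lie_algebra_def by auto

lemma bl_zero[simp]: "br 0 y = 0"
proof -
  have "br 0 y = br 0 y + br 0 y" using bl_add[of 0 0 y] by simp
  then show ?thesis by simp
qed
lemma br_zero[simp]: "br y 0 = 0"
proof -
  have "br y 0 = br y 0 + br y 0" using br_add[of y 0 0] by simp
  then show ?thesis by simp
qed
lemma br_anti: "br y x = - br x y"
proof -
  have "br (x+y) (x+y) = br x x + br y x + (br x y + br y y)" by (simp only: bl_add br_add)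
  then have "br y x + br x y = 0" by simp
  then show ?thesis by (simp only: eq_neg_iff_add_eq_0)
qed
lemma bl_neg: "br (- x) y = - br x y"
proof -
  have "br (- x) y + br x y = br (- x + x) y" by (simp only: bl_add)
  then have "br (- x) y + br x y = 0" by simp
  then show ?thesis by (simp only: eq_neg_iff_add_eq_0)
qed
lemma br_neg: "br x (- y) = - br x y"
proof -
  have "br x (- y) + br x y = br x (- y + y)" by (simp only: br_add)
  then have "br x (- y) + br x y = 0" by simp
  then show ?thesis by (simp only: eq_neg_iff_add_eq_0)
qed
lemma bl_diff: "br (x - y) z = br x z - br y z"
  by (simp only: diff_conv_add_uminus bl_add bl_neg)
lemma br_diff: "br x (y - z) = br x y - br x z"
  by (simp only: diff_conv_add_uminus br_add br_neg)

lemma span1: "y \<in> span {x} \<longleftrightarrow> (\<exists>k. y = s k x)"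
  by (auto simp: span_singleton)

lemma span2: "y \<in> span {a, b} \<longleftrightarrow> (\<exists>p q. y = s p a + s q b)"
proof
  assume "y \<in> span {a, b}"
  then obtain k where "y - s k a \<in> span {b}" by (auto simp: span_insert)
  then obtain q where "y - s k a = s q b" by (auto simp: span1)
  then have "y = s k a + s q b" by (metis diff_add_cancel add.commute)
  then show "\<exists>p q. y = s p a + s q b" by blast
next
  assume "\<exists>p q. y = s p a + s q b"
  then obtain p q where y: "y = s p a + s q b" by blast
  have "a \<in> span {a, b}" "b \<in> span {a, b}" by (auto intro: span_base)
  then show "y \<in> span {a, b}" unfolding y by (intro span_add span_scale)
qed

lemma lie_sub_inter: "lie_sub s br A \<Longrightarrow> lie_sub s br B \<Longrightarrow> lie_sub s br (A \<inter> B)"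
  unfolding lie_sub_def by (auto intro: subspace_inter)

lemma lie_gen_sub: "lie_sub s br (lie_gen s br S)"
proof -
  let ?F = "{B. lie_sub s br B \<and> S \<subseteq> B}"
  have "subspace (\<Inter>?F)"
  proof (rule subspaceI)
    show "0 \<in> \<Inter>?F" unfolding lie_sub_def using subspace_0 by blast
    fix x y c assume "x \<in> \<Inter>?F" "y \<in> \<Inter>?F"
    then show "x + y \<in> \<Inter>?F" unfolding lie_sub_def using subspace_add by blast
  next
    fix x c assume "x \<in> \<Inter>?F"
    then show "s c x \<in> \<Inter>?F" unfolding lie_sub_def using subspace_scale by blast
  qed
  moreover have "\<forall>x\<in>\<Inter>?F. \<forall>y\<in>\<Inter>?F. br x y \<in> \<Inter>?F" unfolding lie_sub_def by blast
  ultimately show ?thesis unfolding lie_gen_def lie_sub_def by blast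
qed

lemma lie_gen_sup: "S \<subseteq> lie_gen s br S"
  unfolding lie_gen_def by auto

lemma lie_gen_min: "lie_sub s br B \<Longrightarrow> S \<subseteq> B \<Longrightarrow> lie_gen s br S \<subseteq> B"
  unfolding lie_gen_def by auto

lemma lie_gen_cong:
  assumes "\<And>T. subspace T \<Longrightarrow> A \<subseteq> T \<longleftrightarrow> B \<subseteq> T"
  shows "lie_gen s br A = lie_gen s br B"
proof -
  have "{C. lie_sub s br C \<and> A \<subseteq> C} = {C. lie_sub s br C \<and> B \<subseteq> C}"
    using assms unfolding lie_sub_def by blast
  then show ?thesis unfolding lie_gen_def by simp
qed

lemma lie_gen_ux: "lie_gen s br (span {u} \<union> span {x}) = lie_gen s br {u, x}"
proof (rule lie_gen_cong)
  fix T assume T: "subspace T"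
  show "span {u} \<union> span {x} \<subseteq> T \<longleftrightarrow> {u, x} \<subseteq> T"
  proof
    assume "span {u} \<union> span {x} \<subseteq> T"
    then show "{u, x} \<subseteq> T" using span_base[of u "{u}"] span_base[of x "{x}"] by auto
  next
    assume "{u, x} \<subseteq> T"
    then show "span {u} \<union> span {x} \<subseteq> T" using T span_minimal[of "{u}" T] span_minimal[of "{x}" T] by auto
  qed
qed

lemma lie_sub_span1: "lie_sub s br (span {x})"
  unfolding lie_sub_def
proof (intro conjI ballI)
  fix a b assume "a \<in> span {x}" "b \<in> span {x}"
  then obtain k m where "a = s k x" "b = s m x" by (auto simp: span1)
  then have "br a b = 0" by (simp add: bl_scale br_scale)
  then show "br a b \<in> span {x}" by (simp add: span_zero)
qed simp

lemma lie_sub_zero: "lie_sub s br {0}"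
  unfolding lie_sub_def by auto

lemma covers_line: assumes "x \<noteq> 0" shows "covers s br (span {x}) {0}"
  unfolding covers_def
proof (intro conjI allI impI)
  show "lie_sub s br {0}" "lie_sub s br (span {x})" by (rule lie_sub_zero, rule lie_sub_span1)
  show "{0} \<subset> span {x}" using assms span_zero span_base[of x "{x}"] by auto
  fix C assume C: "lie_sub s br C \<and> {0} \<subseteq> C \<and> C \<subseteq> span {x}"
  show "C = {0} \<or> C = span {x}"
  proof (cases "C = {0}")
    case False
    then obtain c where c: "c \<in> C" "c \<noteq> 0" using C by auto
    from C c have "c \<in> span {x}" by auto
    then obtain k where "c = s k x" by (auto simp: span1)
    with c have k: "k \<noteq> 0" by auto
    have "s (inverse k) c \<in> C" using C c unfolding lie_sub_def by (auto intro: subspace_scale)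
    then have "x \<in> C" using k \<open>c = s k x\<close> by simp
    then have "span {x} \<subseteq> C" using C unfolding lie_sub_def by (intro span_minimal) auto
    then show ?thesis using C by auto
  qed simp
qed


lemma dim_line: "c \<noteq> 0 \<Longrightarrow> dim (span {c}) = 1"
  by (subst dim_span_eq_card_independent) auto

lemma span2_I1: "a \<in> span {a, b}" and span2_I2: "b \<in> span {a, b}"
  by (auto intro: span_base)

lemma span1_sub2: "span {a} \<subseteq> span {a, b}"
  by (rule span_mono) auto

lemma lie_sub_subspace: "lie_sub s br A \<Longrightarrow> subspace A"
  unfolding lie_sub_def by auto

lemma lie_sub_br: "lie_sub s br A \<Longrightarrow> x \<in> A \<Longrightarrow> y \<in> A \<Longrightarrow> br x y \<in> A"
  unfolding lie_sub_def by auto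

end

lemma K_vs: "vector_space (K_scale :: 'f::field \<Rightarrow> _)"
  unfolding vector_space_def K_scale_def by (auto simp: prod_eq_iff algebra_simps)

lemma K_span: "module.span (K_scale :: 'f::field \<Rightarrow> _) {(0, 0, 1)} = {(0, 0, k) | k. True}"
proof -
  interpret K: vector_space "K_scale :: 'f \<Rightarrow> _" by (rule K_vs)
  show ?thesis unfolding K.span_singleton by (auto simp: K_scale_def)
qed

context lieA
begin

lemma K_case:
  assumes two: "(2::'f) = 0" and v0: "v \<noteq> 0" and KP: "\<And>y. br v y - y \<in> span {v}"
    and e12: "br e1 e2 = v" and ve1: "br v e1 = e1" and ve2: "br v e2 = e2"
    and JW: "\<And>w1 w2. br v w1 = w1 \<Longrightarrow> br v w2 = w2 \<Longrightarrow> br w1 w2 \<in> span {v}"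
  shows "\<exists>\<phi>. lie_iso s br K_scale K_br \<phi> \<and> \<phi> ` span {v} = module.span K_scale {(0, 0, 1)}"
proof -
  have negv: "- z = z" for z :: 'v
  proof -
    have "s (1 + 1) z = z + z" by (simp only: scale_left_distrib scale_one)
    then have "z + z = 0" using two by (simp only: one_add_one) simp
    then show ?thesis by (metis eq_neg_iff_add_eq_0)
  qed
  have negf: "- a = a" for a :: 'f
  proof -
    have "a + a = 2 * a" by simp
    then have "a + a = 0" using two by simp
    then show ?thesis by (metis eq_neg_iff_add_eq_0)
  qed
  have fd: "a - b = a + b" for a b :: 'f
    using negf[of b] by (metis diff_conv_add_uminus)
  have e1v: "br e1 v = e1" using br_anti[of e1 v] ve1 negv by simp
  have e2v: "br e2 v = e2" using br_anti[of e2 v] ve2 negv by simp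
  have e21: "br e2 e1 = v" using br_anti[of e2 e1] e12 negv by simp
  have Wspan: "w \<in> span {e1, e2}" if w: "br v w = w" for w
  proof -
    obtain b2 where b2: "br e2 w = s b2 v" using JW[OF ve2 w] by (auto simp: span1)
    obtain b1 where b1: "br w e1 = s b1 v" using JW[OF w ve1] by (auto simp: span1)
    have "br w v = w" using br_anti[of w v] w negv by simp
    then have "s b2 e1 + s b1 e2 + w = 0" using jac[of e1 e2 w] unfolding b2 b1 e12
      by (simp add: br_scale e1v e2v)
    then have "w = - (s b2 e1 + s b1 e2)" by (metis add.commute eq_neg_iff_add_eq_0)
    then have "w = s b2 e1 + s b1 e2" using negv by simp
    then show ?thesis by (auto simp: span2)
  qed
  define psi :: "'f \<times> 'f \<times> 'f \<Rightarrow> 'v" where "psi X = s (fst X) e1 + s (fst (snd X)) e2 + s (snd (snd X)) v" for X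
  have psi_add: "psi (X + Y) = psi X + psi Y" for X Y
    by (cases X; cases Y) (simp add: psi_def scale_left_distrib algebra_simps)
  have psi_scale: "psi (K_scale c X) = s c (psi X)" for c X
    by (cases X) (simp add: psi_def K_scale_def scale_right_distrib)
  have psi_br: "br (psi X) (psi Y) = psi (K_br X Y)" for X Y
  proof -
    obtain p q r where X: "X = (p, q, r)" by (cases X) auto
    obtain p' q' r' where Y: "Y = (p', q', r')" by (cases Y) auto
    have "br (psi X) (psi Y) = s (p * r') e1 + s (r * p') e1 + s (q * r') e2 + s (r * q') e2 + s (p * q') v + s (q * p') v"
      unfolding X Y psi_def by (simp add: bl_add br_add bl_scale br_scale e12 e21 e1v e2v ve1 ve2 scale_right_distrib ac_simps)
    also have "\<dots> = psi (K_br X Y)"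
      unfolding X Y psi_def K_br_def by (simp add: fd scale_left_distrib ac_simps)
    finally show ?thesis .
  qed
  have psi_ker: "X = 0" if "psi X = 0" for X
  proof -
    obtain p q r where X: "X = (p, q, r)" by (cases X) auto
    have h: "s p e1 + s q e2 + s r v = 0" using that unfolding X psi_def by simp
    have "br v (s p e1 + s q e2 + s r v) = s p e1 + s q e2"
      by (simp add: br_add br_scale ve1 ve2)
    then have h2: "s p e1 + s q e2 = 0" using h by simp
    then have "s r v = 0" using h by simp
    then have r: "r = 0" using v0 by simp
    have "br (s p e1 + s q e2) e2 = s p v" by (simp add: bl_add bl_scale e12)
    then have p: "p = 0" using h2 v0 by simp
    then have "s q e2 = 0" using h2 by simp
    then have "br e1 (s q e2) = 0" by (simp only: br_zero)
    then have q: "q = 0" using v0 by (simp add: br_scale e12)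
    show ?thesis unfolding X using p q r by (simp add: zero_prod_def)
  qed
  have inj: "inj psi"
  proof (rule injI)
    fix X Y assume "psi X = psi Y"
    moreover have "psi (X - Y) + psi Y = psi X" using psi_add[of "X - Y" Y] by simp
    ultimately have "psi (X - Y) = 0" by simp
    then have "X - Y = 0" by (rule psi_ker)
    then show "X = Y" by simp
  qed
  have surj: "surj psi"
  proof -
    have "y \<in> range psi" for y
    proof -
      obtain g where g: "br v y - y = s g v" using KP[of y] by (auto simp: span1)
      have "br v (br v y) = br v y"
      proof -
        have "br v (br v y) = br v ((br v y - y) + y)" by simp
        also have "\<dots> = br v y" unfolding g by (simp only: br_add) (simp add: br_scale)
        finally show ?thesis .
      qed
      then have "br v y \<in> span {e1, e2}" by (rule Wspan)
      then obtain p q where pq: "br v y = s p e1 + s q e2" by (auto simp: span2)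
      have "y = br v y - (br v y - y)" by simp
      also have "\<dots> = psi (p, q, - g)" unfolding g unfolding pq psi_def by simp
      finally show ?thesis by blast
    qed
    then show ?thesis by blast
  qed
  have bij: "bij psi" using inj surj by (rule bijI)
  define phi where "phi = inv psi"
  have pp: "phi (psi X) = X" for X unfolding phi_def using inv_f_f[OF inj] .
  have pp2: "psi (phi y) = y" for y unfolding phi_def using surj_f_inv_f[OF surj] .
  have iso: "lie_iso s br K_scale K_br phi"
    unfolding lie_iso_def
  proof (intro conjI allI)
    show "Vector_Spaces.linear s K_scale phi"
      unfolding Vector_Spaces.linear_iff
    proof (intro conjI allI)
      show "vector_space s" by unfold_locales
      show "vector_space (K_scale :: 'f \<Rightarrow> _)" by (rule K_vs)
      fix x y :: 'v and c :: 'f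
      have "x + y = psi (phi x + phi y)" using psi_add pp2 by simp
      then show "phi (x + y) = phi x + phi y" using pp by simp
      have "s c x = psi (K_scale c (phi x))" using psi_scale pp2 by simp
      then show "phi (s c x) = K_scale c (phi x)" using pp by simp
    qed
    show "bij phi" unfolding phi_def using bij by (rule bij_imp_bij_inv)
    fix x y
    have "br x y = psi (K_br (phi x) (phi y))" using psi_br[of "phi x" "phi y"] pp2 by simp
    then show "phi (br x y) = K_br (phi x) (phi y)" using pp by simp
  qed
  have img: "phi ` span {v} = module.span K_scale {(0, 0, 1)}"
  proof -
    have "psi (0, 0, k) = s k v" for k unfolding psi_def by simp
    then have ph: "phi (s k v) = (0, 0, k)" for k using pp by metis
    have "(0, 0, k) \<in> phi ` range (\<lambda>k. s k v)" for k
      using ph[of k] by (metis rangeI image_eqI)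
    then show ?thesis unfolding K_span span_singleton using ph by auto
  qed
  show ?thesis using iso img by blast
qed

lemma almost_or_K:
  assumes v0: "v \<noteq> 0" and KP: "\<And>y. br v y - y \<in> span {v}"
  shows "almost_abelian s br \<or> ((2::'f) = 0 \<and> (\<exists>\<phi>. lie_iso s br K_scale K_br \<phi>
          \<and> \<phi> ` span {v} = module.span K_scale {(0, 0, 1)}))"
proof -
  have Vk: "br v z = 0" if "z \<in> span {v}" for z
    using that by (auto simp: span1 br_scale)
  have Vk': "br z v = 0" if "z \<in> span {v}" for z
    using that by (auto simp: span1 bl_scale)
  have W1: "br v (br v y) = br v y" for y
  proof -
    have "br v (br v y) = br v ((br v y - y) + y)" by simp
    also have "\<dots> = br v y" using Vk[OF KP[of y]] by (simp only: br_add) simp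
    finally show ?thesis .
  qed
  define W where "W = range (br v)"
  have Wv: "br v w = w" if "w \<in> W" for w using that W1 unfolding W_def by auto
  have inW: "w \<in> W" if "br v w = w" for w using that unfolding W_def by (metis rangeI)
  have WU: "w = 0" if "w \<in> W" "w \<in> span {v}" for w
    using Wv[OF that(1)] Vk[OF that(2)] by simp
  have Wsub: "subspace W"
  proof (rule subspaceI)
    show "0 \<in> W" by (rule inW) simp
    fix a b c assume "a \<in> W" "b \<in> W"
    then show "a + b \<in> W" using Wv by (intro inW) (simp add: br_add)
  next
    fix a c assume "a \<in> W"
    then show "s c a \<in> W" using Wv by (intro inW) (simp add: br_scale)
  qed
  have JW: "br w1 w2 \<in> span {v} \<and> br w1 w2 + br w1 w2 = 0" if "w1 \<in> W" "w2 \<in> W" for w1 w2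
  proof -
    let ?B = "br w1 w2"
    have j: "br v ?B + br w1 (br w2 v) + br w2 (br v w1) = 0" by (rule jac)
    have "br w2 v = - w2" using Wv[OF that(2)] br_anti[of w2 v] by simp
    then have a: "br w1 (br w2 v) = - ?B" by (simp add: br_neg)
    have b: "br w2 (br v w1) = - ?B" using Wv[OF that(1)] br_anti[of w2 w1] by simp
    have e: "br v ?B = ?B + ?B" using j unfolding a b by (simp add: diff_conv_add_uminus[symmetric] diff_eq_eq)
    have "br v ?B - ?B \<in> span {v}" by (rule KP)
    then have Bv: "?B \<in> span {v}" using e by simp
    then have "br v ?B = 0" by (rule Vk)
    then show ?thesis using e Bv by simp
  qed
  show ?thesis
  proof (cases "\<forall>w1\<in>W. \<forall>w2\<in>W. br w1 w2 = 0")
    case True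
    define L2 where "L2 = lie_derived s br UNIV"
    have L2W: "L2 = W"
    proof
      show "L2 \<subseteq> W" unfolding L2_def lie_derived_def
      proof (rule span_minimal[OF _ Wsub], safe)
        fix a b :: 'v
        define za where "za = br v a - a"
        define zb where "zb = br v b - b"
        obtain ga where ga: "za = s ga v" using KP[of a] unfolding za_def by (auto simp: span1)
        obtain gb where gb: "zb = s gb v" using KP[of b] unfolding zb_def by (auto simp: span1)
        have "a = br v a - za" unfolding za_def by simp
        then have a: "a = br v a - s ga v" using ga by simp
        have "b = br v b - zb" unfolding zb_def by simp
        then have b: "b = br v b - s gb v" using gb by simp
        have wa: "br v a \<in> W" "br v b \<in> W" unfolding W_def by auto
        have "br a b = br (br v a - s ga v) (br v b - s gb v)" using a b by simp
        also have "\<dots> = br (br v a) (br v b) - s gb (br (br v a) v) - s ga (br v (br v b))"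
          by (simp add: bl_diff br_diff bl_scale br_scale)
        also have "\<dots> = s gb (br v a) - s ga (br v b)"
          using True wa W1 br_anti[of "br v a" v] by simp
        finally show "br a b \<in> W" using wa Wsub by (simp add: subspace_diff subspace_scale)
      qed
      show "W \<subseteq> L2" unfolding W_def L2_def lie_derived_def by (auto intro: span_base)
    qed
    have "almost_abelian s br"
      unfolding almost_abelian_def Let_def L2_def[symmetric]
    proof (intro exI[of _ v] conjI ballI)
      show "L2 \<inter> span {v} = {0}" unfolding L2W using WU Wsub subspace_0 span_zero by blast
      show "{a + b |a b. a \<in> L2 \<and> b \<in> span {v}} = UNIV"
      proof -
        have "y \<in> {a + b |a b. a \<in> L2 \<and> b \<in> span {v}}" for y
        proof -
          have "y = br v y + (- (br v y - y))" by simp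
          moreover have "br v y \<in> L2" unfolding L2W W_def by auto
          moreover have "- (br v y - y) \<in> span {v}" using KP by (rule span_neg)
          ultimately show ?thesis by blast
        qed
        then show ?thesis by blast
      qed
      fix a assume "a \<in> L2"
      then show "br v a = a" unfolding L2W by (rule Wv)
    next
      fix a b assume "a \<in> L2" "b \<in> L2"
      then show "br a b = 0" using True unfolding L2W by blast
    qed
    then show ?thesis by simp
  next
    case False
    then obtain w1 w2 where w: "w1 \<in> W" "w2 \<in> W" "br w1 w2 \<noteq> 0" by blast
    have two: "(2::'f) = 0"
    proof -
      have "s (1 + 1) (br w1 w2) = br w1 w2 + br w1 w2" by (simp only: scale_left_distrib scale_one)
      then have "s 2 (br w1 w2) = br w1 w2 + br w1 w2" by (simp only: one_add_one)
      then show ?thesis using JW[OF w(1,2)] w(3) by simp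
    qed
    obtain k where k: "br w1 w2 = s k v" using JW[OF w(1,2)] by (auto simp: span1)
    then have k0: "k \<noteq> 0" using w(3) by auto
    define e2 where "e2 = s (inverse k) w2"
    have "br w1 e2 = v" unfolding e2_def using k k0 by (simp add: br_scale)
    moreover have "br v w1 = w1" "br v e2 = e2" using Wv w unfolding e2_def by (auto simp: br_scale)
    moreover have "br w1 w2 \<in> span {v}" if "br v w1 = w1" "br v w2 = w2" for w1 w2
      using JW inW that by blast
    ultimately have "\<exists>\<phi>. lie_iso s br K_scale K_br \<phi> \<and> \<phi> ` span {v} = module.span K_scale {(0, 0, 1)}"
      using K_case[OF two v0 KP] by blast
    then show ?thesis using two by blast
  qed
qed

end

locale lieU = lieA +
  fixes u
  assumes u0: "u \<noteq> 0"
    and sm: "semi_modular s br (span {u})"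
    and nid: "\<not> lie_ideal s br (span {u})"
begin

definition P where "P y \<longleftrightarrow> br u y \<in> span {u, y}"

lemma P_U: "y \<in> span {u} \<Longrightarrow> P y"
  unfolding P_def by (auto simp: span1 br_scale span_zero)

lemma inter_line: assumes "x \<notin> span {u}" shows "span {u} \<inter> span {x} = {0}"
proof -
  have "z = 0" if zu: "z \<in> span {u}" and zx: "z \<in> span {x}" for z
  proof -
    obtain k where z1: "z = s k u" using zu by (auto simp: span1)
    obtain m where z2: "z = s m x" using zx by (auto simp: span1)
    note z = z1 z2
    show ?thesis
    proof (cases "m = 0")
      case False
      then have "x = s (inverse m * k) u" using z by (metis scale_scale scale_one left_inverse)
      then have "x \<in> span {u}" by (auto simp: span1)
      then show ?thesis using assms by simp
    qed (use z in simp)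
  qed
  then show ?thesis using span_zero by auto
qed

lemma F1: assumes "x \<notin> span {u}" shows "covers s br (lie_gen s br {u, x}) (span {u})"
proof -
  have x0: "x \<noteq> 0" using assms span_zero by auto
  have "covers s br (span {x}) (span {u} \<inter> span {x})"
    using inter_line[OF assms] covers_line[OF x0] by simp
  then have "covers s br (lie_gen s br (span {u} \<union> span {x})) (span {u})"
    using sm lie_sub_span1 unfolding semi_modular_def upper_modular_def by blast
  then show ?thesis by (simp add: lie_gen_ux)
qed

lemma gen_facts: "u \<in> lie_gen s br {u, x}" "x \<in> lie_gen s br {u, x}" "span {u} \<subseteq> lie_gen s br {u, x}"
    "lie_sub s br (lie_gen s br {u, x})"
proof -
  show u: "u \<in> lie_gen s br {u, x}" "x \<in> lie_gen s br {u, x}" using lie_gen_sup[of "{u, x}"] by auto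
  show L: "lie_sub s br (lie_gen s br {u, x})" by (rule lie_gen_sub)
  show "span {u} \<subseteq> lie_gen s br {u, x}" using u L unfolding lie_sub_def by (intro span_minimal) auto
qed

lemma maxU: assumes "x \<notin> span {u}" "lie_sub s br C" "span {u} \<subseteq> C" "C \<subseteq> lie_gen s br {u, x}"
  shows "C = span {u} \<or> C = lie_gen s br {u, x}"
  using F1[OF assms(1)] assms(2-4) unfolding covers_def by blast

lemma P_sub: assumes "P x" shows "lie_sub s br (span {u, x})"
  unfolding lie_sub_def
proof (intro conjI ballI)
  fix a b assume "a \<in> span {u, x}" "b \<in> span {u, x}"
  then obtain p q p' q' where ab: "a = s p u + s q x" "b = s p' u + s q' x" by (auto simp: span2)
  have c: "br u x \<in> span {u, x}" using assms unfolding P_def .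
  have "br a b = br (s p u) (s p' u) + br (s q x) (s p' u) + (br (s p u) (s q' x) + br (s q x) (s q' x))"
    by (simp only: ab bl_add br_add)
  then have e: "br a b = s (p' * q) (br x u) + s (q' * p) (br u x)"
    by (simp add: bl_scale br_scale)
  have "br x u \<in> span {u, x}" using c by (simp add: br_anti[of x u] span_neg)
  then show "br a b \<in> span {u, x}" unfolding e using c by (intro span_add span_scale)
qed simp

lemma mixed: assumes x: "x \<notin> span {u}" "P x" and ny: "\<not> P y" shows False
proof -
  obtain al be where ux: "br u x = s al u + s be x" using x(2) unfolding P_def by (auto simp: span2)
  have yU: "y \<notin> span {u}" using ny P_U by blast
  have yxU: "y + x \<notin> span {u}"
  proof
    assume "y + x \<in> span {u}"
    then obtain t where t: "y + x = s t u" by (auto simp: span1)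
    then have xe: "x = s t u - y" by (metis add_diff_cancel_left')
    have "x \<in> span {u, y}" unfolding xe by (intro span_diff span_scale span2_I1 span2_I2)
    moreover have "y = s t u - x" using t by (metis add_diff_cancel_right')
    have "br u y = - (s al u + s be x)"
      using \<open>y = s t u - x\<close> ux by (simp add: br_diff br_scale)
    ultimately have "br u y \<in> span {u, y}" by (simp only:) (intro span_neg span_add span_scale span2_I1)
    then show False using ny unfolding P_def by simp
  qed
  define M where "M = lie_gen s br {u, y}"
  define M1 where "M1 = lie_gen s br {u, y + x}"
  note gM = gen_facts[of y, folded M_def] and gM1 = gen_facts[of "y + x", folded M1_def]
  have I: "lie_sub s br (M \<inter> M1)" using gM(4) gM1(4) by (rule lie_sub_inter)
  have "M \<inter> M1 = span {u} \<or> M \<inter> M1 = M1"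
    using maxU[OF yxU I] gM(3) gM1(3) unfolding M1_def by auto
  then show False
  proof
    assume "M \<inter> M1 = M1"
    then have "y + x \<in> M" using gM1(2) by auto
    then have xM: "x \<in> M" using gM(2) lie_sub_subspace[OF gM(4)]
      by (metis add_diff_cancel_left' subspace_diff)
    have S: "lie_sub s br (span {u, x})" by (rule P_sub[OF x(2)])
    have "span {u, x} \<subseteq> M" using xM gM(1) lie_sub_subspace[OF gM(4)] by (intro span_minimal) auto
    then have "span {u, x} = span {u} \<or> span {u, x} = M"
      using maxU[OF yU S span1_sub2] unfolding M_def by auto
    then show False
    proof
      assume "span {u, x} = span {u}"
      then show False using x(1) span2_I2[of x u] by simp
    next
      assume "span {u, x} = M"
      then have "y \<in> span {u, x}" using gM(2) by simp
      then obtain p q where ye: "y = s p u + s q x" by (auto simp: span2)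
      show False
      proof (cases "q = 0")
        case True
        then have "y \<in> span {u}" using ye by (auto simp: span1)
        then show False using yU by simp
      next
        case False
        have "y - s p u = s q x" using ye by simp
        then have "x = s (inverse q) (y - s p u)" using False by simp
        then have "x \<in> span {u, y}" by (auto intro!: span_scale span_diff span2_I1 span2_I2)
        moreover have "br u y = s q (s al u + s be x)" using ye ux by (simp add: br_add br_scale)
        ultimately have "br u y \<in> span {u, y}" by (auto intro!: span_add span_scale span2_I1)
        then show False using ny unfolding P_def by simp
      qed
    qed
  next
    assume MU: "M \<inter> M1 = span {u}"
    define w where "w = br u y + s al u - s be y"
    have "w \<in> M" unfolding w_def using gM lie_sub_subspace[OF gM(4)] lie_sub_br[OF gM(4)]
      by (intro subspace_diff subspace_add subspace_scale) auto
    moreover have "w = br u (y + x) - s be (y + x)"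
      unfolding w_def by (simp add: br_add ux scale_right_distrib)
    then have "w \<in> M1" using gM1 lie_sub_subspace[OF gM1(4)] lie_sub_br[OF gM1(4)]
      by (auto intro!: subspace_diff subspace_scale)
    ultimately have "w \<in> span {u}" using MU by auto
    then obtain t where "w = s t u" by (auto simp: span1)
    moreover have "br u y = w - s al u + s be y" unfolding w_def by simp
    ultimately have "br u y = s t u - s al u + s be y" by simp
    then have "br u y \<in> span {u, y}" by (auto intro!: span_add span_diff span_scale span2_I1 span2_I2)
    then show False using ny unfolding P_def by simp
  qed
qed

lemma lie_derived_sub: assumes "lie_sub s br M" shows "lie_derived s br M \<subseteq> M"
  unfolding lie_derived_def using assms lie_sub_br[OF assms] lie_sub_subspace[OF assms]
  by (intro span_minimal) auto

lemma lie_derived_lie_sub: assumes "lie_sub s br M" shows "lie_sub s br (lie_derived s br M)"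
  unfolding lie_sub_def
proof (intro conjI ballI)
  show "subspace (lie_derived s br M)" unfolding lie_derived_def by simp
  fix a b assume "a \<in> lie_derived s br M" "b \<in> lie_derived s br M"
  then have "a \<in> M" "b \<in> M" using lie_derived_sub[OF assms] by auto
  then show "br a b \<in> lie_derived s br M" unfolding lie_derived_def by (intro span_base) blast
qed

lemma br_in_derived: "a \<in> M \<Longrightarrow> b \<in> M \<Longrightarrow> br a b \<in> lie_derived s br M"
  unfolding lie_derived_def by (intro span_base) blast

lemma classify_u: assumes x: "x \<notin> span {u}" and C: "lie_sub s br C" "C \<subseteq> lie_gen s br {u, x}"
  "C \<noteq> lie_gen s br {u, x}" "u \<in> C" shows "C = span {u}"
proof -
  have "span {u} \<subseteq> C" using C lie_sub_subspace[OF C(1)] by (intro span_minimal) auto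
  then show ?thesis using maxU[OF x C(1) _ C(2)] C(3) by auto
qed

lemma classify_nu: assumes x: "x \<notin> span {u}" and C: "lie_sub s br C" "C \<subseteq> lie_gen s br {u, x}"
  "u \<notin> C" and c: "c \<in> C" "c \<noteq> 0" shows "C = span {c}"
proof -
  let ?M = "lie_gen s br {u, x}"
  let ?G = "lie_gen s br (span {u} \<union> C)"
  note gM = gen_facts[of x]
  have cU: "c \<notin> span {u}"
  proof
    assume "c \<in> span {u}"
    then obtain k where k: "c = s k u" by (auto simp: span1)
    with c have "k \<noteq> 0" by auto
    have "s (inverse k) c \<in> C" using c lie_sub_subspace[OF C(1)] by (intro subspace_scale)
    then have "u \<in> C" using k \<open>k \<noteq> 0\<close> by simp
    then show False using C(3) by simp
  qed
  have UC: "span {u} \<inter> C = {0}"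
  proof -
    have "z = 0" if zu: "z \<in> span {u}" and zC: "z \<in> C" for z
    proof -
      obtain k where k: "z = s k u" using zu by (auto simp: span1)
      show ?thesis
      proof (rule ccontr)
        assume "z \<noteq> 0"
        then have "k \<noteq> 0" using k by auto
        have "s (inverse k) z \<in> C" using zC lie_sub_subspace[OF C(1)] by (intro subspace_scale)
        then have "u \<in> C" using k \<open>k \<noteq> 0\<close> by simp
        then show False using C(3) by simp
      qed
    qed
    then show ?thesis using lie_sub_subspace[OF C(1)] subspace_0 span_zero by blast
  qed
  have G: "lie_sub s br ?G" by (rule lie_gen_sub)
  have GM: "?G \<subseteq> ?M" using gM C(2) by (intro lie_gen_min) auto
  have UG: "span {u} \<subseteq> ?G" "C \<subseteq> ?G" using lie_gen_sup[of "span {u} \<union> C"] by auto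
  have "?G = span {u} \<or> ?G = ?M" using maxU[OF x G UG(1) GM] .
  then have "?G = ?M" using UG(2) c cU by auto
  then have "covers s br ?G (span {u})" using F1[OF x] by simp
  then have "covers s br C (span {u} \<inter> C)"
    using sm C(1) unfolding semi_modular_def lower_modular_def by blast
  then have cov: "covers s br C {0}" using UC by simp
  have "span {c} \<subseteq> C" using c lie_sub_subspace[OF C(1)] by (intro span_minimal) auto
  then have "span {c} = {0} \<or> span {c} = C"
    using cov lie_sub_span1[of c] span_zero[of "{c}"] unfolding covers_def by blast
  then show ?thesis using c span_base[of c "{c}"] by auto
qed

lemma caseB: assumes nP: "\<And>z. z \<notin> span {u} \<Longrightarrow> \<not> P z" and x: "x \<notin> span {u}"
  shows "mu_algebra s br (lie_gen s br {u, x})"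
proof -
  let ?M = "lie_gen s br {u, x}"
  note gM = gen_facts[of x]
  have dims: "dim C = 1" if C: "lie_sub s br C" "C \<subset> ?M" "C \<noteq> {0}" for C
  proof (cases "u \<in> C")
    case True
    then have "C = span {u}" using classify_u[OF x C(1)] C(2) by auto
    then show ?thesis using dim_line[OF u0] by simp
  next
    case False
    obtain c where c: "c \<in> C" "c \<noteq> 0" using C(3) lie_sub_subspace[OF C(1)] subspace_0 by blast
    then have "C = span {c}" using classify_nu[OF x C(1) _ False] C(2) by auto
    then show ?thesis using dim_line[OF c(2)] by simp
  qed
  have ns: "\<not> lie_solvable s br ?M"
  proof
    assume "lie_solvable s br ?M"
    then obtain n where n: "(lie_derived s br ^^ n) ?M = {0}" unfolding lie_solvable_def by blast
    let ?D = "lie_derived s br ?M"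
    have DM: "?D \<subseteq> ?M" by (rule lie_derived_sub[OF gM(4)])
    have D: "lie_sub s br ?D" by (rule lie_derived_lie_sub[OF gM(4)])
    show False
    proof (cases "?D = ?M")
      case True
      have "(lie_derived s br ^^ m) ?M = ?M" for m by (induction m) (simp_all add: True)
      then show False using n gM(1) u0 by auto
    next
      case False
      define c where "c = br u x"
      have cD: "c \<in> ?D" unfolding c_def using gM by (intro br_in_derived)
      have "P x"
      proof (cases "c \<in> span {u}")
        case True
        then show ?thesis unfolding P_def c_def[symmetric] using span1_sub2 by auto
      next
        case cU: False
        then have c0: "c \<noteq> 0" using span_zero by auto
        have uD: "u \<notin> ?D"
        proof
          assume "u \<in> ?D"
          then have "?D = span {u}" using classify_u[OF x D DM False] by simp
          then show False using cD cU by simp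
        qed
        have Dc: "?D = span {c}" using classify_nu[OF x D DM uD cD c0] .
        have "br u c \<in> ?D" using gM DM cD by (intro br_in_derived) auto
        then have "P c" unfolding P_def Dc using span_mono[of "{c}" "{u, c}"] by auto
        then show ?thesis using nP[OF cU] by simp
      qed
      then show False using nP[OF x] by simp
    qed
  qed
  show ?thesis unfolding mu_algebra_def using gM(4) ns dims by blast
qed

lemma caseA: assumes allP: "\<And>y. P y"
  shows "almost_abelian s br \<or> (two_zero s \<and> (\<exists>\<phi>. lie_iso s br K_scale K_br \<phi>
          \<and> \<phi> ` span {u} = module.span K_scale {(0, 0, 1)}))"
proof -
  have idealI: "lie_ideal s br (span {u})" if h: "\<And>x. br u x \<in> span {u}"
    unfolding lie_ideal_def
  proof (intro conjI allI ballI)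
    show "subspace (span {u})" by simp
    fix x y assume "y \<in> span {u}"
    then obtain k where "y = s k u" by (auto simp: span1)
    then have "br x y = s k (- br u x)" by (simp add: br_scale br_anti[of x u])
    then show "br x y \<in> span {u}" using h[of x] by (simp add: span_scale span_neg)
  qed
  obtain y0 where y0: "y0 \<notin> span {u}"
  proof -
    have "\<not> (\<forall>y. y \<in> span {u})"
    proof
      assume "\<forall>y. y \<in> span {u}"
      then have "lie_ideal s br (span {u})" by (intro idealI) blast
      then show False using nid by simp
    qed
    then show ?thesis using that by blast
  qed
  obtain a0 l where e0: "br u y0 = s a0 u + s l y0" using allP[of y0] unfolding P_def by (auto simp: span2)
  have key: "br u y - s l y \<in> span {u}" for y
  proof (cases "y \<in> span {u, y0}")
    case True
    then obtain p q where ye: "y = s p u + s q y0" by (auto simp: span2)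
    have "br u y = s q (br u y0)" unfolding ye by (simp add: br_add br_scale)
    then have "br u y - s l y = s (q * a0) u + s (q * l) y0 - (s (l * p) u + s (l * q) y0)"
      unfolding e0 ye by (simp add: scale_right_distrib)
    also have "\<dots> = s (q * a0) u - s (l * p) u" by (simp add: mult.commute)
    finally show ?thesis by (simp add: span_diff span_scale span_base)
  next
    case False
    obtain a m where ey: "br u y = s a u + s m y" using allP[of y] unfolding P_def by (auto simp: span2)
    obtain a1 n where eyy: "br u (y + y0) = s a1 u + s n (y + y0)"
      using allP[of "y + y0"] unfolding P_def by (auto simp: span2)
    have E: "s a u + s m y + (s a0 u + s l y0) = s a1 u + s n (y + y0)"
      using eyy unfolding br_add ey e0 .
    have "s (m - n) y - (s (a1 - a - a0) u + s (n - l) y0)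
        = (s a u + s m y + (s a0 u + s l y0)) - (s a1 u + s n (y + y0))"
      by (simp add: algebra_simps)
    then have H1: "s (m - n) y = s (a1 - a - a0) u + s (n - l) y0" using E by simp
    have mn: "m = n"
    proof (rule ccontr)
      assume "m \<noteq> n"
      then have "y = s (inverse (m - n)) (s (a1 - a - a0) u + s (n - l) y0)"
        using H1 by (metis right_minus_eq scale_one scale_scale left_inverse)
      moreover have "s (inverse (m - n)) (s (a1 - a - a0) u + s (n - l) y0) \<in> span {u, y0}"
        by (intro span_scale span_add span2_I1 span2_I2)
      ultimately have "y \<in> span {u, y0}" by simp
      then show False using False by simp
    qed
    have nl: "n = l"
    proof (rule ccontr)
      assume "n \<noteq> l"
      have "s (n - l) y0 = - s (a1 - a - a0) u" using H1 mn by (simp add: eq_neg_iff_add_eq_0 add.commute)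
      then have "y0 = s (inverse (n - l)) (- s (a1 - a - a0) u)"
        using \<open>n \<noteq> l\<close> by (metis right_minus_eq scale_one scale_scale left_inverse)
      moreover have "s (inverse (n - l)) (- s (a1 - a - a0) u) \<in> span {u}"
        by (intro span_neg span_scale span_base) simp
      ultimately have "y0 \<in> span {u}" by simp
      then show False using y0 by simp
    qed
    have "br u y - s l y = s a u" using ey mn nl by simp
    then show ?thesis by (simp add: span_scale span_base)
  qed
  have l0: "l \<noteq> 0"
  proof
    assume "l = 0"
    then have "lie_ideal s br (span {u})" using key by (intro idealI) simp
    then show False using nid by simp
  qed
  define v where "v = s (inverse l) u"
  have v0: "v \<noteq> 0" unfolding v_def using l0 u0 by simp
  have uv: "u = s l v" unfolding v_def using l0 by simp
  have spv: "span {v} = span {u}"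
  proof
    show "span {v} \<subseteq> span {u}" unfolding v_def by (intro span_minimal) (auto intro: span_scale span_base)
    have "u \<in> span {v}" using uv by (auto simp: span1)
    then show "span {u} \<subseteq> span {v}" by (intro span_minimal) auto
  qed
  have KP: "br v y - y \<in> span {v}" for y
  proof -
    have "br v y - y = s (inverse l) (br u y - s l y)"
      unfolding v_def using l0 by (simp add: bl_scale scale_right_diff_distrib)
    then show ?thesis using key[of y] spv by (simp add: span_scale)
  qed
  show ?thesis using almost_or_K[OF v0 KP] spv unfolding two_zero_def by simp
qed

end

theorem lemma3p4:
  fixes s :: "'f::field \<Rightarrow> 'v::ab_group_add \<Rightarrow> 'v" and br :: "'v \<Rightarrow> 'v \<Rightarrow> 'v" and u :: 'v
  assumes "lie_algebra s br" and "fin_dim s" and "u \<noteq> 0"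
    and "semi_modular s br (module.span s {u})"
    and "\<not> lie_ideal s br (module.span s {u})"
  shows "almost_abelian s br
    \<or> (\<forall>x. x \<notin> module.span s {u} \<longrightarrow> mu_algebra s br (lie_gen s br {u, x}))
    \<or> ((2::'f) = 0 \<and> (\<exists>\<phi>. lie_iso s br K_scale K_br \<phi>
          \<and> \<phi> ` module.span s {u} = module.span K_scale {(0, 0, 1)}))"
proof -
  interpret lieU s br u
    by unfold_locales (use assms in auto)
  show ?thesis
  proof (cases "\<forall>y. P y")
    case True
    then show ?thesis using caseA unfolding two_zero_def by blast
  next
    case False
    then obtain y where ny: "\<not> P y" by blast
    have "\<not> P z" if "z \<notin> span {u}" for z using mixed[OF that _ ny] by blast
    then show ?thesis using caseB by blast
  qed
qed

end
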